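(* If $\mathcal{O}$ is a D-cube, then the L-graph $\mathcal{L}_{\mathcal{O}}(\emptyset)$ is acyclic.
   Context: For sets $U,V$ let $U\oplus V=(U\cup V)\setminus(U\cap V)$. An $n$-cube orientation is a directed graph $\mathcal{O}$ on the vertex set of all subsets of $[n]$ containing, for each vertex $V$ and $i\in[n]$, exactly one of the directed edges $(V,V\oplus\{i\})$, $(V\oplus\{i\},V)$; its outmap is $\phi(V)=\{i: (V,V\oplus\{i\})\in\mathcal{O}\}$. For a vertex $V$, the L-graph $\mathcal{L}_{\mathcal{O}}(V)$ has vertex set $[n]\setminus V$ and an arc $(i,j)$ for distinct $i,j\notin V$ whenever $j\in\phi(V)\oplus\phi(V\cup\{i\})$; in particular $\mathcal{L}_{\mathcal{O}}(\emptyset)$ has vertex set $[n]$. Given $M\in\mathbb{R}^{n\times n}$ and $V\subseteq[n]$, let $M(V)$ be the matrix whose $i$-th column is $-M_i$ if $i\in V$ and the $i$-th unit vector if $i\notin V$. A D-cube is an $n$-cube orientation with outmap $\phi(V)=\{i\in[n]: (M(V)^{-1}\mathbf{q})_i<0\}$, where $M$ is symmetric positive definite and $\mathbf{q}\in\mathbb{R}^n$ is generic, i.e. no entry of $M(V)^{-1}\mathbf{q}$ is zero for any $V\subseteq[n]$. (Such an orientation is a unique sink orientation.) *)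

theory Defs
  imports "HOL-Analysis.Analysis"
begin

text \<open>The ground set [n] is modelled by a finite type 'n; vertices of the cube are sets of type 'n set.\<close>

definition symdiff :: "'a set \<Rightarrow> 'a set \<Rightarrow> 'a set" (infixl "\<oplus>\<^sub>s" 65) where
  "U \<oplus>\<^sub>s V = (U \<union> V) - (U \<inter> V)"

definition cube_orientation :: "('n::finite set \<times> 'n set) set \<Rightarrow> bool" where
  "cube_orientation Or \<longleftrightarrow>
     (\<forall>V i. ((V, V \<oplus>\<^sub>s {i}) \<in> Or) \<noteq> ((V \<oplus>\<^sub>s {i}, V) \<in> Or)) \<and>
     (\<forall>(U, W) \<in> Or. \<exists>i. W = U \<oplus>\<^sub>s {i})"

definition outmap :: "('n::finite set \<times> 'n set) set \<Rightarrow> 'n set \<Rightarrow> 'n set" where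
  "outmap Or V = {i. (V, V \<oplus>\<^sub>s {i}) \<in> Or}"

definition L_graph :: "('n::finite set \<times> 'n set) set \<Rightarrow> 'n set \<Rightarrow> ('n \<times> 'n) set" where
  "L_graph Or V = {(i, j). i \<notin> V \<and> j \<notin> V \<and> i \<noteq> j \<and>
                          j \<in> outmap Or V \<oplus>\<^sub>s outmap Or (V \<union> {i})}"

text \<open>M(V): column i is -M_i if i in V, else the i-th unit vector (A $ r $ c = row r, column c).\<close>
definition MV :: "real^'n^'n \<Rightarrow> 'n::finite set \<Rightarrow> real^'n^'n" where
  "MV M V = (\<chi> r c. if c \<in> V then - (M $ r $ c) else (if r = c then 1 else 0))"

definition sym_pos_def :: "real^'n::finite^'n \<Rightarrow> bool" where
  "sym_pos_def M \<longleftrightarrow> transpose M = M \<and> (\<forall>x. x \<noteq> 0 \<longrightarrow> x \<bullet> (M *v x) > 0)"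

definition generic_q :: "real^'n::finite^'n \<Rightarrow> real^'n \<Rightarrow> bool" where
  "generic_q M q \<longleftrightarrow> (\<forall>V i. (matrix_inv (MV M V) *v q) $ i \<noteq> 0)"

definition D_cube :: "('n::finite set \<times> 'n set) set \<Rightarrow> bool" where
  "D_cube Or \<longleftrightarrow> cube_orientation Or \<and>
     (\<exists>M q. sym_pos_def M \<and> generic_q M q \<and>
        (\<forall>V. outmap Or V = {i. (matrix_inv (MV M V) *v q) $ i < 0}))"

end

theory Submission imports Defs begin

lemma inv_apply:
  fixes A :: "real^'n::finite^'n"
  assumes "invertible A" "A *v x = q"
  shows "matrix_inv A *v q = x"
proof -
  have "matrix_inv A ** A = mat 1"
    using assms(1) unfolding invertible_def matrix_inv_def by (rule someI2_ex) auto
  then show ?thesis using assms(2)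
    by (metis matrix_vector_mul_assoc matrix_vector_mul_lid)
qed

lemma ker_inv:
  fixes A :: "real^'n::finite^'n"
  assumes "\<And>x. A *v x = 0 \<Longrightarrow> x = 0"
  shows "invertible A"
  using assms invertible_left_inverse matrix_left_invertible_ker by blast

lemma two_sum:
  fixes f g :: "'n::finite \<Rightarrow> real"
  assumes "i \<noteq> j"
  shows "(\<Sum>c\<in>UNIV. f c * (if c = i then a else if c = j then b else 0)) = f i * a + f j * b"
proof -
  have "(\<Sum>c\<in>UNIV. f c * (if c = i then a else if c = j then b else 0))
      = (\<Sum>c\<in>UNIV. (if c = i then f c * a else 0) + (if c = j then f c * b else 0))"
    by (rule sum.cong) (use assms in auto)
  also have "\<dots> = f i * a + f j * b" by (simp add: sum.distrib)
  finally show ?thesis .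
qed

lemma MV1_apply:
  "(MV M {i} *v x) $ r = - M $ r $ i * x $ i + (if r = i then 0 else x $ r)"
proof -
  have "(MV M {i} *v x) $ r = (\<Sum>c\<in>UNIV. (if c = i then - M $ r $ i * x $ i else 0) + (if c = r \<and> c \<noteq> i then x $ r else 0))"
    unfolding matrix_vector_mult_def MV_def by (simp, rule sum.cong, auto)
  also have "\<dots> = - M $ r $ i * x $ i + (if r = i then 0 else x $ r)"
  proof -
    have "(\<Sum>c\<in>UNIV. (if c = r \<and> c \<noteq> i then x $ r else 0)) = (if r = i then 0 else x $ r)"
    proof (cases "r = i")
      case True then show ?thesis by simp
    next
      case False
      then have "(\<Sum>c\<in>UNIV. (if c = r \<and> c \<noteq> i then x $ r else 0)) = (\<Sum>c\<in>UNIV. (if c = r then x $ r else 0))"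
        by (intro sum.cong) auto
      then show ?thesis using False by simp
    qed
    then show ?thesis by (simp add: sum.distrib)
  qed
  finally show ?thesis .
qed

lemma MV0: "MV M {} = mat 1"
  unfolding MV_def mat_def by (simp add: vec_eq_iff)

lemma pd_facts:
  assumes "sym_pos_def M" "i \<noteq> j"
  shows "M $ i $ i > 0" "(M $ i $ j)^2 < M $ i $ i * M $ j $ j" "M $ i $ j = M $ j $ i"
proof -
  have sym: "M $ a $ b = M $ b $ a" for a b
  proof -
    have tr: "transpose M = M" using assms(1) unfolding sym_pos_def_def by simp
    show ?thesis using arg_cong[OF tr, of "\<lambda>A. A$b$a"] by (simp add: transpose_def)
  qed
  have pd: "x \<noteq> 0 \<Longrightarrow> x \<bullet> (M *v x) > 0" for x using assms(1) unfolding sym_pos_def_def by auto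
  have quad: "(\<chi> k. if k = i then a else if k = j then b else 0) \<bullet> (M *v (\<chi> k. if k = i then a else if k = j then b else 0))
     = a*a*M$i$i + 2*a*b*M$i$j + b*b*M$j$j" for a b
  proof -
    have e: "(M *v (\<chi> k. if k = i then a else if k = j then b else 0)) $ r = M$r$i*a + M$r$j*b" for r
      unfolding matrix_vector_mult_def using two_sum[OF assms(2), of "\<lambda>c. M$r$c" a b] by simp
    have "(\<chi> k. if k = i then a else if k = j then b else 0) \<bullet> (M *v (\<chi> k. if k = i then a else if k = j then b else 0))
        = (\<Sum>c\<in>UNIV. (M$c$i*a + M$c$j*b) * (if c = i then a else if c = j then b else 0))"
      unfolding inner_vec_def e by (simp add: mult.commute)
    also have "\<dots> = (M$i$i*a + M$i$j*b)*a + (M$j$i*a + M$j$j*b)*b"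
      using two_sum[OF assms(2), of "\<lambda>c. M$c$i*a + M$c$j*b" a b] by simp
    finally show ?thesis using sym[of j i] by (simp add: algebra_simps)
  qed
  have nz: "(\<chi> k. if k = i then a else if k = j then b else 0) \<noteq> (0::real^_)" if "a \<noteq> 0" for a b
  proof
    assume "(\<chi> k. if k = i then a else if k = j then b else 0) = (0::real^_)"
    then have "(\<chi> k. if k = i then a else if k = j then b else 0) $ i = (0::real^_) $ i" by simp
    then show False using that by simp
  qed
  have nz2: "(\<chi> k. if k = i then a else if k = j then b else 0) \<noteq> (0::real^_)" if "b \<noteq> 0" for a b
  proof
    assume "(\<chi> k. if k = i then a else if k = j then b else 0) = (0::real^_)"
    then have "(\<chi> k. if k = i then a else if k = j then b else 0) $ j = (0::real^_) $ j" by simp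
    then show False using that assms(2) by simp
  qed
  show ii: "M $ i $ i > 0" using pd[OF nz[of 1 0]] unfolding quad[of 1 0] by simp
  have jj: "M $ j $ j > 0" using pd[OF nz2[where a=0 and b=1]] unfolding quad[of 0 1] by simp
  have "0 < (M$j$j)*(M$j$j)*M$i$i + 2*(M$j$j)*(- M$i$j)*M$i$j + (- M$i$j)*(- M$i$j)*M$j$j"
    using pd[OF nz[of "M$j$j" "- M$i$j"]] jj unfolding quad[of "M$j$j" "- M$i$j"] by simp
  then have "0 < M$j$j * (M$i$i*M$j$j - (M$i$j)^2)" by (simp add: algebra_simps power2_eq_square)
  then show "(M $ i $ j)^2 < M $ i $ i * M $ j $ j" using jj by (simp add: zero_less_mult_iff)
  show "M $ i $ j = M $ j $ i" by (rule sym)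
qed

lemma sign_step:
  fixes qj c :: real
  assumes "qj \<noteq> 0" "qj - c \<noteq> 0" "(qj < 0) \<noteq> (qj - c < 0)"
  shows "qj^2 < c^2"
proof -
  have "\<bar>qj\<bar> < \<bar>c\<bar>" using assms by auto
  then show ?thesis using power_strict_mono[of "\<bar>qj\<bar>" "\<bar>c\<bar>" 2] by simp
qed

lemma key_ineq:
  fixes a b m mii mjj qi qj :: real
  assumes "mii > 0" "mjj > 0" "m^2 < mii * mjj" "qj^2 < (m * qi / mii)^2"
  shows "qj^2 / mjj < qi^2 / mii"
proof -
  have "qj^2 * mii^2 < m^2 * qi^2" using assms(1,4) by (simp add: power_divide field_simps)
  also have "\<dots> \<le> mii * mjj * qi^2" using assms(3) by (simp add: mult_right_mono)
  finally have "mii * (qj^2 * mii) < mii * (mjj * qi^2)" by (simp add: power2_eq_square algebra_simps)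
  then have "qj^2 * mii < mjj * qi^2" using assms(1) by simp
  then show ?thesis using assms(1,2) by (simp add: field_simps)
qed

theorem lemma5p3:
  fixes Or :: "('n::finite set \<times> 'n set) set"
  assumes "D_cube Or"
  shows "acyclic (L_graph Or {})"
proof -
  obtain M q where pd: "sym_pos_def M" and gen: "generic_q M q"
    and om: "\<And>V. outmap Or V = {i. (matrix_inv (MV M V) *v q) $ i < 0}"
    using assms unfolding D_cube_def by blast
  have inv0: "matrix_inv (MV M {}) *v q = q"
    by (rule inv_apply) (auto intro!: ker_inv simp: MV0)
  define g where "g k = (q$k)^2 / M$k$k" for k
  have arc: "g j < g i" if ij: "(i, j) \<in> L_graph Or {}" for i j
  proof -
    have ne: "i \<noteq> j" and jin: "j \<in> outmap Or {} \<oplus>\<^sub>s outmap Or ({} \<union> {i})"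
      using ij unfolding L_graph_def by auto
    have Mii: "M$i$i > 0" and Mij: "(M$j$i)^2 < M$j$j * M$i$i" and sy: "M$j$i = M$i$j"
    proof -
      show "M$i$i > 0" using pd_facts(1)[OF pd ne] .
      show "M$j$i = M$i$j" using pd_facts(3)[OF pd ne[symmetric]] .
      show "(M$j$i)^2 < M$j$j * M$i$i" using pd_facts(2)[OF pd ne[symmetric]] .
    qed
    define x where "x = (\<chi> r. if r = i then - q$i / M$i$i else q$r - M$r$i * q$i / M$i$i)"
    have Mx: "MV M {i} *v x = q"
      using Mii by (simp add: vec_eq_iff MV1_apply x_def field_simps)
    have invi: "invertible (MV M {i})"
    proof (rule ker_inv)
      fix y assume y: "MV M {i} *v y = 0"
      have yi: "y$i = 0" using arg_cong[OF y, of "\<lambda>v. v$i"] Mii by (simp add: MV1_apply)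
      show "y = 0"
      proof (rule vec_eq_iff[THEN iffD2, rule_format])
        fix r show "y$r = 0$r"
          using arg_cong[OF y, of "\<lambda>v. v$r"] yi by (simp add: MV1_apply split: if_splits)
      qed
    qed
    have invx: "matrix_inv (MV M {i}) *v q = x" by (rule inv_apply[OF invi Mx])
    have xj: "x$j = q$j - M$j$i * q$i / M$i$i" using ne by (simp add: x_def)
    have q0: "q$j \<noteq> 0" using gen inv0 unfolding generic_q_def by metis
    have x0: "x$j \<noteq> 0" using gen invx unfolding generic_q_def by metis
    have sg: "(q$j < 0) \<noteq> (x$j < 0)"
      using jin unfolding om symdiff_def inv0 by (simp add: invx) blast
    have "(q$j)^2 < (M$j$i * q$i / M$i$i)^2"
      by (rule sign_step) (use q0 x0 sg xj in auto)
    moreover have "M$j$j > 0" using pd_facts[OF pd ne[symmetric]] by simp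
    ultimately show ?thesis unfolding g_def
      using key_ineq[OF Mii _ _, of "M$j$j" "M$j$i" "q$j" "q$i"] Mij by (simp add: mult.commute)
  qed
  have "(a, b) \<in> (L_graph Or {})\<^sup>+ \<Longrightarrow> g b < g a" for a b
  proof (induction rule: trancl_induct)
    case (base y) then show ?case using arc by blast
  next
    case (step y z) then show ?case using arc[of y z] by linarith
  qed
  then show ?thesis unfolding acyclic_def by blast
qed

end
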